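(* For every $t\in(0,1)$, $$\lim_{n \to \infty} \sum_{k \ge 0} B^{n-k}_k(t;1) = 2^{-t}.$$
   Context: For $h\ge 0$, the $h$-Bernstein polynomials are $$B^m_k(t;h) = \binom{m}{k}\frac{\prod_{i=0}^{k-1}(t+ih)\prod_{i=0}^{m-k-1}(1-t+ih)}{\prod_{i=0}^{m-1}(1+ih)}$$ for integers $0\le k\le m$ (empty products equal $1$), and $B^m_k(t;h)=0$ for $m<k$. Here $h=1$. *)

theory Defs
  imports "HOL-Analysis.Analysis"
begin

definition hBernstein :: "nat \<Rightarrow> nat \<Rightarrow> real \<Rightarrow> real \<Rightarrow> real" where
  "hBernstein m k t h =
     (if m < k then 0
      else real (m choose k) *
        (\<Prod>i<k. t + real i * h) * (\<Prod>i<m - k. 1 - t + real i * h) /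
        (\<Prod>i<m. 1 + real i * h))"

end

theory Submission
  imports Defs "HOL-Computational_Algebra.Formal_Power_Series"
begin


definition pp :: "real \<Rightarrow> nat \<Rightarrow> real" where "pp t n = pochhammer t n / fact n"

lemma pp_0[simp]: "pp t 0 = 1" by (simp add: pp_def)

lemma pp_1[simp]: "pp t (Suc 0) = t" by (simp add: pp_def)

lemma pp_Suc: "pp t (Suc n) * (Suc n) = pp t n * (t + n)"
proof -
  have "fact (Suc n) = (real (Suc n)) * (fact n :: real)" by simp
  moreover have "(fact n :: real) \<noteq> 0" by simp
  ultimately show ?thesis unfolding pp_def pochhammer_Suc
    by (simp del: fact_Suc of_nat_Suc)
qed

lemma prodpoch: "(\<Prod>i<m. a + real i * 1) = pochhammer a m"
  by (simp add: pochhammer_prod lessThan_atLeast0)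

lemma hB_eq: "hBernstein (n-k) k t 1 = (if n < 2*k then 0 else pp t k * pp (1-t) (n - 2*k))"
proof (cases "n < 2*k")
  case True then show ?thesis by (simp add: hBernstein_def)
next
  case False
  have kn: "k \<le> n - k" using False by auto
  have e: "n - k - k = n - 2*k" by auto
  have "hBernstein (n-k) k t 1 = real (n - k choose k) * pochhammer t k * pochhammer (1 - t) (n-2*k) / pochhammer 1 (n-k)"
    unfolding hBernstein_def prodpoch e using False by simp
  also have "\<dots> = pp t k * pp (1-t) (n - 2*k)"
    unfolding binomial_fact[OF kn, where 'a=real] e pp_def pochhammer_fact[symmetric]
    by (simp add: field_simps)
  finally show ?thesis using False by simp
qed

definition AA :: "real \<Rightarrow> real fps" where
  "AA t = Abs_fps (\<lambda>i. if even i then pp t (i div 2) else 0)"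
definition BB :: "real \<Rightarrow> real fps" where
  "BB t = Abs_fps (pp (1-t))"

lemma AA_ode: "fps_deriv (AA t) = fps_X^2 * fps_deriv (AA t) + fps_X * (fps_const (2*t) * AA t)"
proof (rule fps_ext)
  fix n
  show "fps_nth (fps_deriv (AA t)) n = fps_nth (fps_X^2 * fps_deriv (AA t) + fps_X * (fps_const (2*t) * AA t)) n"
  proof (cases n)
    case 0 then show ?thesis by (simp add: AA_def fps_X_power_mult_nth)
  next
    case (Suc m)
    show ?thesis
    proof (cases "even m")
      case True
      then obtain k where m: "m = 2*k" by auto
      have "pp t (Suc k) * (Suc k) = pp t k * (t + k)" by (rule pp_Suc)
      then show ?thesis using Suc m
        by (simp add: AA_def fps_X_power_mult_nth algebra_simps)
    next
      case False
      then show ?thesis using Suc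
        by (simp add: AA_def fps_X_power_mult_nth)
    qed
  qed
qed

lemma BB_ode: "fps_deriv (BB t) = fps_X * fps_deriv (BB t) + (1 - fps_const t) * BB t"
proof (rule fps_ext)
  fix n
  have "pp (1-t) (Suc n) * (Suc n) = pp (1-t) n * (1 - t + n)" by (rule pp_Suc)
  then show "fps_nth (fps_deriv (BB t)) n = fps_nth (fps_X * fps_deriv (BB t) + (1 - fps_const t) * BB t) n"
    by (cases n) (simp_all add: BB_def algebra_simps)
qed



lemma F_ode: "(1 + fps_X) * fps_deriv (AA t * ((1 - fps_X) * BB t)) + fps_const t * (AA t * ((1 - fps_X) * BB t)) = 0"
proof -
  define a where "a = AA t"
  define b where "b = BB t"
  define x :: "real fps" where "x = fps_X"
  define c where "c = fps_const t"
  define a' where "a' = fps_deriv a"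
  define b' where "b' = fps_deriv b"
  have c2: "fps_const (2*t) = 2 * c"
  proof -
    have "(2::real fps) = fps_const 2" by (rule fps_numeral_fps_const)
    then show ?thesis unfolding c_def by (simp only: fps_const_mult)
  qed
  have "a' = x^2 * a' + x * (2 * c * a)"
    using AA_ode[of t] unfolding c2 a'_def a_def x_def .
  then have h1: "(1 - x^2) * a' = x * (2 * c * a)"
    by (simp add: algebra_simps)
  have "b' = x * b' + (1 - c) * b"
    using BB_ode[of t] unfolding b'_def b_def x_def c_def .
  then have h2: "(1 - x) * b' = (1 - c) * b"
    by (simp add: algebra_simps)
  have d: "fps_deriv (a * ((1 - x) * b)) = a' * ((1 - x) * b) + a * ((1 - x) * b' - b)"
    unfolding a'_def b'_def x_def by (simp add: algebra_simps)
  have "(1 + x) * fps_deriv (a * ((1 - x) * b)) + c * (a * ((1 - x) * b))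
      = ((1 - x^2) * a') * b + (1 + x) * a * ((1 - x) * b') - (1 + x) * a * b + c * a * (1 - x) * b"
    unfolding d by (simp add: algebra_simps power2_eq_square)
  also have "\<dots> = (x * (2 * c * a)) * b + (1 + x) * a * ((1 - c) * b) - (1 + x) * a * b + c * a * (1 - x) * b"
    unfolding h1 h2 ..
  also have "\<dots> = 0"
    by (simp add: algebra_simps)
  finally show ?thesis unfolding a_def b_def x_def c_def .
qed

lemma F_coeff: "fps_nth (AA t * ((1 - fps_X) * BB t)) n = (-1)^n * pp t n"
proof -
  define F where "F = AA t * ((1 - fps_X) * BB t)"
  have rec: "fps_nth F (Suc n) * (Suc n) = - (t + n) * fps_nth F n" for n
  proof -
    have "fps_nth ((1 + fps_X) * fps_deriv F + fps_const t * F) n = 0"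
      using F_ode[of t] unfolding F_def by simp
    then show ?thesis by (cases n) (simp_all add: algebra_simps)
  qed
  have F0: "fps_nth F 0 = 1" unfolding F_def by (simp add: AA_def BB_def)
  have "fps_nth F n = (-1)^n * pp t n"
  proof (induction n)
    case 0 then show ?case using F0 by simp
  next
    case (Suc n)
    have "fps_nth F (Suc n) * Suc n = - (t + n) * ((-1)^n * pp t n)"
      using rec[of n] Suc by simp
    also have "\<dots> = (-1)^(Suc n) * (pp t n * (t + n))" by (simp add: algebra_simps)
    also have "\<dots> = ((-1)^(Suc n) * pp t (Suc n)) * real (Suc n)"
      using pp_Suc[of t n] by (simp only: mult.assoc)
    finally have "fps_nth F (Suc n) * real (Suc n) = ((-1)^(Suc n) * pp t (Suc n)) * real (Suc n)" .
    then show ?case by (rule mult_right_cancel[THEN iffD1, rotated]) simp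
  qed
  then show ?thesis unfolding F_def .
qed

lemma S_coeff: "fps_nth (AA t * BB t) n = (\<Sum>i\<le>n. (-1)^i * pp t i)"
proof (induction n)
  case 0
  have "fps_nth (AA t * ((1 - fps_X) * BB t)) 0 = fps_nth (AA t * BB t) 0"
    by (simp add: AA_def BB_def)
  then show ?case using F_coeff[of t 0] by simp
next
  case (Suc n)
  have "AA t * ((1 - fps_X) * BB t) = AA t * BB t - fps_X * (AA t * BB t)"
    by (simp add: algebra_simps)
  then have "fps_nth (AA t * ((1 - fps_X) * BB t)) (Suc n) = fps_nth (AA t * BB t) (Suc n) - fps_nth (AA t * BB t) n"
    by simp
  then show ?case using F_coeff[of t "Suc n"] Suc by simp
qed

lemma sum_hB: "(\<Sum>k\<le>n. hBernstein (n - k) k t 1) = fps_nth (AA t * BB t) n"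
proof -
  have "fps_nth (AA t * BB t) n = (\<Sum>i=0..n. (if even i then pp t (i div 2) else 0) * pp (1-t) (n - i))"
    by (simp add: fps_mult_nth AA_def BB_def)
  also have "\<dots> = (\<Sum>i=0..n. if even i then pp t (i div 2) * pp (1-t) (n - i) else 0)"
    by (rule sum.cong) auto
  also have "\<dots> = (\<Sum>i\<in>{i\<in>{0..n}. even i}. pp t (i div 2) * pp (1-t) (n - i))"
    by (rule sum.inter_filter[symmetric]) simp
  also have "{i\<in>{0..n}. even i} = (\<lambda>k. 2*k) ` {k\<in>{..n}. \<not> n < 2*k}"
    by (auto simp: image_iff elim!: evenE)
  also have "(\<Sum>i\<in>(\<lambda>k. 2*k) ` {k\<in>{..n}. \<not> n < 2*k}. pp t (i div 2) * pp (1-t) (n - i))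
      = (\<Sum>k\<in>{k\<in>{..n}. \<not> n < 2*k}. pp t k * pp (1-t) (n - 2*k))"
    by (subst sum.reindex) (auto simp: inj_on_def)
  also have "\<dots> = (\<Sum>k\<le>n. hBernstein (n - k) k t 1)"
    unfolding hB_eq by (subst sum.inter_filter) (auto intro: sum.cong)
  finally show ?thesis by simp
qed



lemma pp_pos: "0 < t \<Longrightarrow> 0 < pp t n"
  by (simp add: pp_def pochhammer_pos)

lemma pp_mono: assumes "0 < t" "t < 1" shows "pp t (Suc n) \<le> pp t n"
proof -
  have "pp t (Suc n) * Suc n = pp t n * (t + n)" by (rule pp_Suc)
  also have "\<dots> \<le> pp t n * Suc n"
    using assms pp_pos[of t n] by (intro mult_left_mono) auto
  finally show ?thesis by (simp del: of_nat_Suc)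
qed

lemma pp_bound: assumes "0 < t" "t < 1" shows "pp t n \<le> exp (- (1 - t) * harm n)"
proof (induction n)
  case 0 then show ?case by (simp add: harm_def)
next
  case (Suc n)
  have "pp t (Suc n) = pp t n * (1 + (- (1 - t) / Suc n))"
    using pp_Suc[of t n] by (simp add: field_simps)
  also have "\<dots> \<le> pp t n * exp (- (1 - t) / Suc n)"
    using pp_pos[of t n] assms by (intro mult_left_mono exp_ge_add_one_self) auto
  also have "\<dots> \<le> exp (- (1 - t) * harm n) * exp (- (1 - t) / Suc n)"
    using Suc by (intro mult_right_mono) auto
  also have "\<dots> = exp (- (1 - t) * harm (Suc n))"
    by (simp add: harm_Suc exp_add[symmetric] field_simps)
  finally show ?case .
qed

lemma pp_lim: assumes "0 < t" "t < 1" shows "pp t \<longlonglongrightarrow> 0"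
proof (rule tendsto_sandwich[of "\<lambda>_. 0" _ _ "\<lambda>n. exp (- (1 - t) * harm n)"])
  show "\<forall>\<^sub>F n in sequentially. 0 \<le> pp t n" using pp_pos[OF assms(1)] by (simp add: less_imp_le)
  show "\<forall>\<^sub>F n in sequentially. pp t n \<le> exp (- (1 - t) * harm n)" using pp_bound[OF assms] by simp
  show "(\<lambda>_. 0) \<longlonglongrightarrow> (0::real)" by simp
  have "filterlim (\<lambda>n. (1 - t) * harm n) at_top sequentially"
    using assms by (intro filterlim_tendsto_pos_mult_at_top[OF tendsto_const _ harm_at_top]) auto
  then have "filterlim (\<lambda>n. - ((1 - t) * harm n)) at_bot sequentially"
    by (rule filterlim_uminus_at_top[THEN iffD1])
  moreover have "(\<lambda>n. - ((1 - t) * harm n)) = (\<lambda>n. - (1 - t) * harm n :: real)"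
    by (rule ext) (simp add: algebra_simps)
  ultimately have "filterlim (\<lambda>n. - (1 - t) * harm n :: real) at_bot sequentially"
    by metis
  then show "(\<lambda>n. exp (- (1 - t) * harm n)) \<longlonglongrightarrow> 0"
    using exp_at_bot filterlim_compose by blast
qed

lemma leib_bound:
  fixes a :: "nat \<Rightarrow> real"
  assumes "a \<longlonglongrightarrow> 0" "\<And>n. 0 \<le> a n" "\<And>n. a (Suc n) \<le> a n"
  shows "\<bar>(\<Sum>i. (-1)^i * a i) - (\<Sum>i<m. (-1)^i * a i)\<bar> \<le> a m"
proof -
  note L = summable_Leibniz'[OF assms]
  show ?thesis
  proof (cases "even m")
    case True
    then obtain n where m: "m = 2*n" by auto
    have "(\<Sum>i<2*n+1. (-1)^i * a i) = (\<Sum>i<2*n. (-1)^i * a i) + a (2*n)" by simp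
    then show ?thesis using L(2)[of n] L(4)[of n] m by auto
  next
    case False
    then obtain n where m: "m = 2*n+1" by (auto elim: oddE)
    have "(\<Sum>i<2*(Suc n). (-1)^i * a i) = (\<Sum>i<2*n+1. (-1)^i * a i) - a (2*n+1)" by simp
    then show ?thesis using L(2)[of "Suc n"] L(4)[of n] m by auto
  qed
qed

lemma ser_bound:
  assumes "0 < t" "t < 1" "0 \<le> x" "x \<le> 1"
  shows "summable (\<lambda>i. (-1)^i * (pp t i * x^i))"
    "\<bar>(\<Sum>i. (-1)^i * (pp t i * x^i)) - (\<Sum>i<m. (-1)^i * (pp t i * x^i))\<bar> \<le> pp t m"
proof -
  have a1: "(\<lambda>i. pp t i * x^i) \<longlonglongrightarrow> 0"
  proof (rule tendsto_sandwich[of "\<lambda>_. 0" _ _ "pp t"])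
    show "\<forall>\<^sub>F n in sequentially. 0 \<le> pp t n * x^n"
      using pp_pos[OF assms(1)] assms by (simp add: less_imp_le)
    show "\<forall>\<^sub>F n in sequentially. pp t n * x^n \<le> pp t n"
      using pp_pos[OF assms(1)] assms by (intro always_eventually allI mult_left_le) (auto simp: less_imp_le power_le_one)
  qed (use pp_lim[OF assms(1,2)] in auto)
  have a2: "0 \<le> pp t n * x^n" for n using pp_pos[OF assms(1)] assms by (simp add: less_imp_le)
  have a3: "pp t (Suc n) * x^(Suc n) \<le> pp t n * x^n" for n
    using pp_mono[OF assms(1,2)] pp_pos[OF assms(1)] assms
    by (intro mult_mono) (auto simp: power_decreasing less_imp_le mult_left_le_one_le)
  show "summable (\<lambda>i. (-1)^i * (pp t i * x^i))" by (rule summable_Leibniz'(1)[OF a1 a2 a3])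
  have "\<bar>(\<Sum>i. (-1)^i * (pp t i * x^i)) - (\<Sum>i<m. (-1)^i * (pp t i * x^i))\<bar> \<le> pp t m * x^m"
    by (rule leib_bound[OF a1 a2 a3])
  also have "\<dots> \<le> pp t m" using pp_pos[OF assms(1), of m] assms
    by (intro mult_left_le) (auto simp: less_imp_le power_le_one)
  finally show "\<bar>(\<Sum>i. (-1)^i * (pp t i * x^i)) - (\<Sum>i<m. (-1)^i * (pp t i * x^i))\<bar> \<le> pp t m" .
qed

lemma ser_val:
  assumes "0 \<le> x" "x < 1"
  shows "(\<Sum>i. (-1)^i * (pp t i * x^i)) = (1 + x) powr (- t)"
proof -
  have "(\<lambda>i. ((-t) gchoose i) * x^i) sums (1 + x) powr (- t)"
    using assms by (intro gen_binomial_real) auto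
  moreover have "((-t) gchoose i) * x^i = (-1)^i * (pp t i * x^i)" for i
    by (simp add: gbinomial_pochhammer pp_def)
  ultimately show ?thesis by (simp add: sums_iff)
qed

lemma ser_one:
  assumes "0 < t" "t < 1"
  shows "(\<Sum>i. (-1)^i * pp t i) = 2 powr (- t)"
proof -
  define s where "s = (\<Sum>i. (-1)^i * pp t i)"
  have bnd: "\<bar>s - 2 powr (- t)\<bar> \<le> 2 * pp t N" for N
  proof -
    define P where "P x = (\<Sum>i<N. (-1)^i * (pp t i * x^i))" for x :: real
    have s1: "\<bar>s - P 1\<bar> \<le> pp t N" using ser_bound(2)[OF assms, of 1 N] unfolding s_def P_def by simp
    have "\<bar>s - (1 + x) powr (- t)\<bar> \<le> 2 * pp t N + \<bar>P 1 - P x\<bar>" if "x \<in> {0<..<1}" for x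
    proof -
      have "\<bar>(1 + x) powr (- t) - P x\<bar> \<le> pp t N"
        using ser_bound(2)[OF assms, of x N] ser_val[of x t] that unfolding P_def by auto
      then show ?thesis using s1 by linarith
    qed
    then have ev: "\<forall>\<^sub>F x in at_left 1. \<bar>s - (1 + x) powr (- t)\<bar> \<le> 2 * pp t N + \<bar>P 1 - P x\<bar>"
      using eventually_at_left_real[of 0 1] by (auto elim: eventually_mono)
    have l1: "((\<lambda>x. \<bar>s - (1 + x) powr (- t)\<bar>) \<longlongrightarrow> \<bar>s - (1 + 1) powr (- t)\<bar>) (at_left 1)"
      by (intro tendsto_intros) auto
    have l2: "((\<lambda>x. 2 * pp t N + \<bar>P 1 - P x\<bar>) \<longlongrightarrow> 2 * pp t N + \<bar>P 1 - P 1\<bar>) (at_left 1)"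
      unfolding P_def by (intro tendsto_intros)
    have "\<bar>s - (1 + 1) powr (- t)\<bar> \<le> 2 * pp t N + \<bar>P 1 - P 1\<bar>"
      by (rule tendsto_le[OF _ l2 l1 ev]) simp
    then show ?thesis by simp
  qed
  have "(\<lambda>N. 2 * pp t N) \<longlonglongrightarrow> 2 * 0" by (intro tendsto_mult tendsto_const pp_lim assms)
  then have lim: "(\<lambda>N. 2 * pp t N) \<longlonglongrightarrow> 0" by simp
  have "\<bar>s - 2 powr (- t)\<bar> \<le> 0"
    by (rule LIMSEQ_le_const[OF lim]) (use bnd in auto)
  then show ?thesis unfolding s_def by simp
qed


theorem mainTheorem12:
  fixes t :: real
  assumes "0 < t" and "t < 1"
  shows "(\<lambda>n. \<Sum>k\<le>n. hBernstein (n - k) k t 1) \<longlonglongrightarrow> 2 powr (- t)"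
proof -
  have eq: "(\<lambda>n. \<Sum>k\<le>n. hBernstein (n - k) k t 1) = (\<lambda>n. \<Sum>i\<le>n. (-1)^i * pp t i)"
    by (rule ext) (simp add: sum_hB S_coeff)
  have "summable (\<lambda>i. (-1)^i * pp t i)"
    using ser_bound(1)[OF assms, of 1] by simp
  then have "(\<lambda>n. \<Sum>i\<le>n. (-1)^i * pp t i) \<longlonglongrightarrow> (\<Sum>i. (-1)^i * pp t i)"
    by (rule summable_LIMSEQ')
  then show ?thesis unfolding eq ser_one[OF assms] .
qed

end
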